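(* Let $n\ge 2$. The map sending a fully heterochronous ranked tree shape with $n$ leaves to its $\mathbf{F}$-matrix is a bijection between the set of fully heterochronous ranked tree shapes with $n$ leaves and the set of $(2n-2)\times(2n-2)$ lower triangular matrices $F=(F_{i,j})_{0\le i,j\le 2n-3}$ of non-negative integers satisfying the following constraints. 1. Rows are monotone increasing: $F_{i,j-1}\le F_{i,j}$ for $1\le j\le i\le 2n-3$. 2. Columns are monotone decreasing with difference at most $1$: $F_{i-1,j}-1\le F_{i,j}\le F_{i-1,j}$ for $0\le j<i\le 2n-3$. 3. (a) The diagonal entries are positive and satisfy $F_{0,0}=2$, $F_{i,i}=F_{i-1,i-1}\pm 1$ for $0<i<2n-3$, and $F_{2n-3,2n-3}=1$. (In the tree, $F_{i,i}=F_{i-1,i-1}-1$ if the node of rank $i$ is a leaf, i.e. the $i$-th event is a sampling event, and $F_{i,i}=F_{i-1,i-1}+1$ if it is an internal node, i.e. a coalescent event.) (b) The subdiagonal entries satisfy $F_{i,i-1}=F_{i-1,i-1}-1$ for $1\le i\le 2n-3$. (c) For $2\le i\le 2n-3$ and $1\le j\le i-2$, $$F_{i,j-1}+F_{i-1,j}-F_{i-1,j-1}-1\le F_{i,j}\le F_{i,j-1}+F_{i-1,j}-F_{i-1,j-1}.$$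
   Context: A fully heterochronous ranked tree shape with $n$ leaves is a rooted full binary tree (every node has out-degree $0$ or $2$), without leaf labels, with $n$ leaves and $n-1$ internal nodes, together with a total ordering of all $2n-1$ nodes (leaves included) such that nodes appear in increasing order along every path from the root to a leaf; the position of a node in this order, numbered $0,1,\dots,2n-2$, is its rank (the root has rank $0$). Two such objects are identified if there is an isomorphism of rooted trees preserving ranks. Its $\mathbf{F}$-matrix is the $(2n-2)\times(2n-2)$ lower triangular matrix $F$, with indices running from $0$ to $2n-3$, where for $0\le j\le i$ the entry $F_{i,j}$ is the number of edges from a node $v$ to a node $w$ (with $v$ the parent of $w$) such that the rank of $v$ is at most $j$ and the rank of $w$ is larger than $i$. *)

theory Defs
  imports Main
begin

text \<open>A fully heterochronous ranked tree shape with n leaves has 2n-1 nodes with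
pairwise distinct ranks 0..2n-2; since rank-preserving isomorphisms fix every rank,
an isomorphism class is determined exactly by the parent map on ranks. We therefore
represent a tree shape by its parent function p (on ranks), normalised to 0 outside
the non-root ranks {1..2n-2}.\<close>

definition children :: "(nat \<Rightarrow> nat) \<Rightarrow> nat \<Rightarrow> nat \<Rightarrow> nat set" where
  "children p n v = {w. 1 \<le> w \<and> w \<le> 2*n - 2 \<and> p w = v}"

definition is_leaf :: "(nat \<Rightarrow> nat) \<Rightarrow> nat \<Rightarrow> nat \<Rightarrow> bool" where
  "is_leaf p n v \<longleftrightarrow> children p n v = {}"

definition fh_ranked_tree_shapes :: "nat \<Rightarrow> (nat \<Rightarrow> nat) set" where
  "fh_ranked_tree_shapes n = {p.
      (\<forall>w. 1 \<le> w \<and> w \<le> 2*n - 2 \<longrightarrow> p w < w) \<and>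
      (\<forall>w. (w = 0 \<or> w > 2*n - 2) \<longrightarrow> p w = 0) \<and>
      (\<forall>v \<le> 2*n - 2. card (children p n v) = 0 \<or> card (children p n v) = 2) \<and>
      card {v. v \<le> 2*n - 2 \<and> is_leaf p n v} = n}"

text \<open>F-matrix, indices 0..2n-3, normalised to 0 outside the lower triangle.
The edges are exactly (p w, w) for w in {1..2n-2}.\<close>
definition F_matrix :: "nat \<Rightarrow> (nat \<Rightarrow> nat) \<Rightarrow> nat \<Rightarrow> nat \<Rightarrow> nat" where
  "F_matrix n p i j = (if j \<le> i \<and> i \<le> 2*n - 3
      then card {w. 1 \<le> w \<and> w \<le> 2*n - 2 \<and> p w \<le> j \<and> i < w} else 0)"

definition F_matrices :: "nat \<Rightarrow> (nat \<Rightarrow> nat \<Rightarrow> nat) set" where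
  "F_matrices n = {F.
      \<comment> \<open>lower triangular (2n-2)x(2n-2), entries outside the index range normalised to 0\<close>
      (\<forall>i j. \<not> (j \<le> i \<and> i \<le> 2*n - 3) \<longrightarrow> F i j = 0) \<and>
      \<comment> \<open>1. rows increasing\<close>
      (\<forall>i j. 1 \<le> j \<and> j \<le> i \<and> i \<le> 2*n - 3 \<longrightarrow> F i (j - 1) \<le> F i j) \<and>
      \<comment> \<open>2. columns decreasing with difference at most 1\<close>
      (\<forall>i j. j < i \<and> i \<le> 2*n - 3 \<longrightarrow>
          int (F (i - 1) j) - 1 \<le> int (F i j) \<and> F i j \<le> F (i - 1) j) \<and>
      \<comment> \<open>3(a) diagonal\<close>
      (\<forall>i \<le> 2*n - 3. F i i > 0) \<and>
      F 0 0 = 2 \<and>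
      (\<forall>i. 0 < i \<and> i < 2*n - 3 \<longrightarrow>
          int (F i i) = int (F (i - 1) (i - 1)) + 1 \<or> int (F i i) = int (F (i - 1) (i - 1)) - 1) \<and>
      F (2*n - 3) (2*n - 3) = 1 \<and>
      \<comment> \<open>3(b) subdiagonal\<close>
      (\<forall>i. 1 \<le> i \<and> i \<le> 2*n - 3 \<longrightarrow> int (F i (i - 1)) = int (F (i - 1) (i - 1)) - 1) \<and>
      \<comment> \<open>3(c)\<close>
      (\<forall>i j. 2 \<le> i \<and> i \<le> 2*n - 3 \<and> 1 \<le> j \<and> j \<le> i - 2 \<longrightarrow>
          int (F i (j - 1)) + int (F (i - 1) j) - int (F (i - 1) (j - 1)) - 1 \<le> int (F i j) \<and>
          int (F i j) \<le> int (F i (j - 1)) + int (F (i - 1) j) - int (F (i - 1) (j - 1)))}"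

end

theory Submission
  imports Defs
begin

definition SS :: "(nat \<Rightarrow> nat) \<Rightarrow> nat \<Rightarrow> nat \<Rightarrow> nat \<Rightarrow> nat" where
  "SS p N i j = (\<Sum>w\<in>{Suc i..N}. if p w \<le> j then 1 else 0)"

definition CC :: "(nat \<Rightarrow> nat) \<Rightarrow> nat \<Rightarrow> nat \<Rightarrow> nat \<Rightarrow> nat" where
  "CC p N i j = (\<Sum>w\<in>{Suc i..N}. if p w = j then 1 else 0)"

lemma card_filter_sum:
  assumes "finite A" shows "card {x\<in>A. P x} = (\<Sum>x\<in>A. if P x then 1 else 0)"
  using sum.inter_filter[OF assms, of "\<lambda>x. 1::nat" P] by simp

lemma SS_empty: "SS p N N j = 0"
  by (simp add: SS_def)

lemma SS_step: "1 \<le> i \<Longrightarrow> i \<le> N \<Longrightarrow> SS p N (i-1) j = SS p N i j + (if p i \<le> j then 1 else 0)"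
  unfolding SS_def by (simp add: sum.atLeast_Suc_atMost)

lemma CC_step: "1 \<le> i \<Longrightarrow> i \<le> N \<Longrightarrow> CC p N (i-1) j = CC p N i j + (if p i = j then 1 else 0)"
  unfolding CC_def by (simp add: sum.atLeast_Suc_atMost)

lemma SS_col: "SS p N i (Suc j) = SS p N i j + CC p N i (Suc j)"
  unfolding SS_def CC_def sum.distrib[symmetric] by (rule sum.cong) auto

lemma SS_0: "SS p N i 0 = CC p N i 0"
  unfolding SS_def CC_def by simp

lemma card_children:
  assumes "\<forall>w. 1 \<le> w \<and> w \<le> 2*n-2 \<longrightarrow> p w < w"
  shows "card (children p n v) = CC p (2*n-2) v v"
proof -
  have "w \<in> children p n v \<longleftrightarrow> w \<in> {w\<in>{Suc v..2*n-2}. p w = v}" for w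
  proof
    assume "w \<in> children p n v"
    then have h: "1 \<le> w" "w \<le> 2*n-2" "p w = v" unfolding children_def by auto
    then have "p w < w" using assms by blast
    then show "w \<in> {w\<in>{Suc v..2*n-2}. p w = v}" using h by auto
  next
    assume "w \<in> {w\<in>{Suc v..2*n-2}. p w = v}"
    then show "w \<in> children p n v" unfolding children_def by auto
  qed
  then have "children p n v = {w\<in>{Suc v..2*n-2}. p w = v}" by blast
  then show ?thesis unfolding CC_def
    using card_filter_sum[of "{Suc v..2*n-2}" "\<lambda>w. p w = v"] by simp
qed

lemma Fm: "F_matrix n p i j = (if j \<le> i \<and> i \<le> 2*n-3 then SS p (2*n-2) i j else 0)"
proof -
  have "{w. 1 \<le> w \<and> w \<le> 2*n - 2 \<and> p w \<le> j \<and> i < w} = {w\<in>{Suc i..2*n-2}. p w \<le> j}"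
    by auto
  then show ?thesis unfolding F_matrix_def SS_def
    using card_filter_sum[of "{Suc i..2*n-2}" "\<lambda>w. p w \<le> j"] by simp
qed

lemma forward:
  assumes n2: "n \<ge> 2" and pin: "p \<in> fh_ranked_tree_shapes n"
  shows "F_matrix n p \<in> F_matrices n"
proof -
  define M where "M = 2*n-3"
  define N where "N = 2*n-2"
  define F where "F = F_matrix n p"
  define S where "S = SS p N"
  define C where "C = CC p N"
  have NM: "N = Suc M" using n2 unfolding M_def N_def by simp
  have lt: "\<And>w. 1 \<le> w \<Longrightarrow> w \<le> N \<Longrightarrow> p w < w"
    using pin unfolding fh_ranked_tree_shapes_def N_def by auto
  have ch: "\<And>v. v \<le> N \<Longrightarrow> C v v = 0 \<or> C v v = 2"
  proof -
    fix v assume "v \<le> N"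
    then have "card (children p n v) = 0 \<or> card (children p n v) = 2"
      using pin unfolding fh_ranked_tree_shapes_def N_def by auto
    moreover have "card (children p n v) = C v v"
      unfolding C_def N_def by (rule card_children) (use lt N_def in auto)
    ultimately show "C v v = 0 \<or> C v v = 2" by simp
  qed
  have FS: "\<And>i j. j \<le> i \<Longrightarrow> i \<le> M \<Longrightarrow> F i j = S i j"
    unfolding F_def S_def M_def N_def by (simp add: Fm)
  have Sst: "\<And>i j. 1 \<le> i \<Longrightarrow> i \<le> N \<Longrightarrow> S (i-1) j = S i j + (if p i \<le> j then 1 else 0)"
    unfolding S_def by (rule SS_step)
  have Cst: "\<And>i j. 1 \<le> i \<Longrightarrow> i \<le> N \<Longrightarrow> C (i-1) j = C i j + (if p i = j then 1 else 0)"
    unfolding C_def by (rule CC_step)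
  have Scol: "\<And>i j. 1 \<le> j \<Longrightarrow> S i j = S i (j-1) + C i j"
  proof -
    fix i j :: nat assume "1 \<le> j"
    then have "Suc (j-1) = j" by simp
    then show "S i j = S i (j-1) + C i j"
      using SS_col[of p N i "j-1"] unfolding S_def C_def by simp
  qed
  have h1: "\<forall>i j. \<not> (j \<le> i \<and> i \<le> 2*n - 3) \<longrightarrow> F i j = 0"
    unfolding F_def by (simp add: Fm)
  have h2: "\<forall>i j. 1 \<le> j \<and> j \<le> i \<and> i \<le> 2*n - 3 \<longrightarrow> F i (j - 1) \<le> F i j"
  proof (intro allI impI)
    fix i j :: nat assume a: "1 \<le> j \<and> j \<le> i \<and> i \<le> 2*n - 3"
    have "F i (j-1) = S i (j-1)" using a by (intro FS) (auto simp: M_def)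
    moreover have "F i j = S i j" using a FS[of j i] unfolding M_def by simp
    ultimately show "F i (j - 1) \<le> F i j" using Scol[of j i] a by simp
  qed
  have h3: "\<forall>i j. j < i \<and> i \<le> 2*n - 3 \<longrightarrow>
          int (F (i - 1) j) - 1 \<le> int (F i j) \<and> F i j \<le> F (i - 1) j"
  proof (intro allI impI)
    fix i j :: nat assume a: "j < i \<and> i \<le> 2*n - 3"
    then show "int (F (i - 1) j) - 1 \<le> int (F i j) \<and> F i j \<le> F (i - 1) j"
      using FS[of j "i-1"] FS[of j i] Sst[of i j] NM unfolding M_def by auto
  qed
  have h4: "\<forall>i \<le> 2*n - 3. F i i > 0"
  proof (intro allI impI)
    fix i assume a: "i \<le> 2*n-3"
    then show "F i i > 0" using FS[of i i] Sst[of "Suc i" i] lt[of "Suc i"] NM unfolding M_def by auto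
  qed
  have h5: "F 0 0 = 2"
    using FS[of 0 0] Sst[of 1 0] lt[of 1] NM ch[of 0] SS_0[of p N 0] unfolding S_def C_def by auto
  have h6: "\<forall>i. 0 < i \<and> i < 2*n - 3 \<longrightarrow>
          int (F i i) = int (F (i - 1) (i - 1)) + 1 \<or> int (F i i) = int (F (i - 1) (i - 1)) - 1"
  proof (intro allI impI)
    fix i :: nat assume a: "0 < i \<and> i < 2*n - 3"
    then show "int (F i i) = int (F (i - 1) (i - 1)) + 1 \<or> int (F i i) = int (F (i - 1) (i - 1)) - 1"
    proof -
      have f1: "F i i = S i i" using a by (intro FS) (auto simp: M_def)
      have f2: "F (i-1) (i-1) = S (i-1) (i-1)" using a by (intro FS) (auto simp: M_def)
      have e1: "S i i = S i (i-1) + C i i" using a Scol by simp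
      have e2: "S (i-1) (i-1) = S i (i-1) + 1" using a Sst[of i "i-1"] lt[of i] NM by (auto simp: M_def)
      have e3: "C i i = 0 \<or> C i i = 2" using a ch NM by (auto simp: M_def)
      show ?thesis using f1 f2 e1 e2 e3 by auto
    qed
  qed
  have h7: "F (2*n - 3) (2*n - 3) = 1"
    using FS[of M M] Sst[of N M] lt[of N] NM SS_empty[of p N M] unfolding M_def S_def by auto
  have h8: "\<forall>i. 1 \<le> i \<and> i \<le> 2*n - 3 \<longrightarrow> int (F i (i - 1)) = int (F (i - 1) (i - 1)) - 1"
  proof (intro allI impI)
    fix i :: nat assume a: "1 \<le> i \<and> i \<le> 2*n - 3"
    then show "int (F i (i - 1)) = int (F (i - 1) (i - 1)) - 1"
    proof -
      have f1: "F i (i-1) = S i (i-1)" using a by (intro FS) (auto simp: M_def)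
      have f2: "F (i-1) (i-1) = S (i-1) (i-1)" using a by (intro FS) (auto simp: M_def)
      have e2: "S (i-1) (i-1) = S i (i-1) + 1" using a Sst[of i "i-1"] lt[of i] NM by (auto simp: M_def)
      show ?thesis using f1 f2 e2 by auto
    qed
  qed
  have h9: "\<forall>i j. 2 \<le> i \<and> i \<le> 2*n - 3 \<and> 1 \<le> j \<and> j \<le> i - 2 \<longrightarrow>
          int (F i (j - 1)) + int (F (i - 1) j) - int (F (i - 1) (j - 1)) - 1 \<le> int (F i j) \<and>
          int (F i j) \<le> int (F i (j - 1)) + int (F (i - 1) j) - int (F (i - 1) (j - 1))"
  proof (intro allI impI)
    fix i j :: nat assume a: "2 \<le> i \<and> i \<le> 2*n - 3 \<and> 1 \<le> j \<and> j \<le> i - 2"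
    have e1: "S i j = S i (j-1) + C i j" using a Scol by simp
    have e2: "S (i-1) j = S (i-1) (j-1) + C (i-1) j" using a Scol by simp
    have e3: "C (i-1) j = C i j + (if p i = j then 1 else 0)" using a Cst NM unfolding M_def by simp
    show "int (F i (j - 1)) + int (F (i - 1) j) - int (F (i - 1) (j - 1)) - 1 \<le> int (F i j) \<and>
          int (F i j) \<le> int (F i (j - 1)) + int (F (i - 1) j) - int (F (i - 1) (j - 1))"
    proof -
      have f1: "F i j = S i j" using a by (intro FS) (auto simp: M_def)
      have f2: "F i (j-1) = S i (j-1)" using a by (intro FS) (auto simp: M_def)
      have f3: "F (i-1) j = S (i-1) j" using a by (intro FS) (auto simp: M_def)
      have f4: "F (i-1) (j-1) = S (i-1) (j-1)" using a by (intro FS) (auto simp: M_def)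
      show ?thesis using f1 f2 f3 f4 e1 e2 e3 by auto
    qed
  qed
  show ?thesis unfolding F_matrices_def F_def[symmetric] mem_Collect_eq
    by (intro conjI h1 h2 h3 h4 h5 h6 h7 h8 h9)
qed

lemma SS_eq_from_F:
  assumes n2: "n \<ge> 2" and eq: "F_matrix n p = F_matrix n q" and ji: "j \<le> i" and iN: "i \<le> 2*n-2"
  shows "SS p (2*n-2) i j = SS q (2*n-2) i j"
proof (cases "i = 2*n-2")
  case True then show ?thesis by (simp add: SS_empty)
next
  case False
  then have "i \<le> 2*n-3" using iN by simp
  then show ?thesis using fun_cong[OF fun_cong[OF eq, of i], of j] ji by (simp add: Fm)
qed

lemma inj_part:
  assumes n2: "n \<ge> 2" and pin: "p \<in> fh_ranked_tree_shapes n" and qin: "q \<in> fh_ranked_tree_shapes n"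
    and eq: "F_matrix n p = F_matrix n q"
  shows "p = q"
proof
  fix w
  show "p w = q w"
  proof (cases "1 \<le> w \<and> w \<le> 2*n-2")
    case True
    have P1: "\<forall>w. 1 \<le> w \<and> w \<le> 2*n - 2 \<longrightarrow> p w < w"
      using pin unfolding fh_ranked_tree_shapes_def mem_Collect_eq by (rule conjunct1)
    have Q1: "\<forall>w. 1 \<le> w \<and> w \<le> 2*n - 2 \<longrightarrow> q w < w"
      using qin unfolding fh_ranked_tree_shapes_def mem_Collect_eq by (rule conjunct1)
    have ltp: "p w < w" using P1[rule_format, OF True] .
    have ltq: "q w < w" using Q1[rule_format, OF True] .
    have ind: "(if p w \<le> j then 1 else 0) = (if q w \<le> j then 1 else (0::nat))" if "j < w" for j
    proof -
      have "SS p (2*n-2) (w-1) j = SS p (2*n-2) w j + (if p w \<le> j then 1 else 0)"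
        using True by (intro SS_step) auto
      moreover have "SS q (2*n-2) (w-1) j = SS q (2*n-2) w j + (if q w \<le> j then 1 else 0)"
        using True by (intro SS_step) auto
      moreover have "SS p (2*n-2) (w-1) j = SS q (2*n-2) (w-1) j"
        using that True by (intro SS_eq_from_F[OF n2 eq]) auto
      moreover have "SS p (2*n-2) w j = SS q (2*n-2) w j"
        using that True by (intro SS_eq_from_F[OF n2 eq]) auto
      ultimately show ?thesis by linarith
    qed
    have "q w \<le> p w" using ind[OF ltp] by (auto split: if_splits)
    moreover have "p w \<le> q w" using ind[OF ltq] by (auto split: if_splits)
    ultimately show ?thesis by simp
  next
    case False
    then have h: "w = 0 \<or> w > 2*n-2" by auto
    have P2: "\<forall>w. (w = 0 \<or> w > 2*n - 2) \<longrightarrow> p w = 0"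
      using pin unfolding fh_ranked_tree_shapes_def mem_Collect_eq by (rule conjunct2[THEN conjunct1])
    have Q2: "\<forall>w. (w = 0 \<or> w > 2*n - 2) \<longrightarrow> q w = 0"
      using qin unfolding fh_ranked_tree_shapes_def mem_Collect_eq by (rule conjunct2[THEN conjunct1])
    have "p w = 0" using P2[rule_format, OF h] .
    moreover have "q w = 0" using Q2[rule_format, OF h] .
    ultimately show ?thesis by simp
  qed
qed

lemma step01:
  fixes d :: "nat \<Rightarrow> nat"
  assumes w1: "1 \<le> w" and le1: "\<forall>j<w. d j \<le> 1" and dw: "d (w-1) = 1"
    and mono: "\<forall>j. 1 \<le> j \<and> j < w \<longrightarrow> d (j-1) \<le> d j"
  shows "(LEAST j. 0 < d j) < w \<and> (\<forall>j<w. d j = (if (LEAST j. 0 < d j) \<le> j then 1 else 0))"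
proof -
  define q where "q = (LEAST j. 0 < d j)"
  have mono2: "a \<le> b \<longrightarrow> b < w \<longrightarrow> d a \<le> d b" for a b
  proof (induction b)
    case 0 then show ?case by simp
  next
    case (Suc b)
    show ?case
    proof (intro impI)
      assume h: "a \<le> Suc b" "Suc b < w"
      show "d a \<le> d (Suc b)"
      proof (cases "a = Suc b")
        case True then show ?thesis by simp
      next
        case False
        then have "d a \<le> d b" using Suc h by simp
        also have "d b \<le> d (Suc b)" using mono[rule_format, of "Suc b"] h by simp
        finally show ?thesis .
      qed
    qed
  qed
  have "0 < d (w-1)" using dw by simp
  then have qle: "q \<le> w-1" and dq: "0 < d q" unfolding q_def by (auto intro: Least_le LeastI)
  have "q < w" using qle w1 by simp
  moreover have "\<forall>j<w. d j = (if q \<le> j then 1 else 0)"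
  proof (intro allI impI)
    fix j assume jw: "j < w"
    show "d j = (if q \<le> j then 1 else 0)"
    proof (cases "q \<le> j")
      case True
      then have "d q \<le> d j" using mono2 jw by blast
      moreover have "d j \<le> 1" using le1 jw by blast
      ultimately show ?thesis using True dq by simp
    next
      case False
      then have "j < q" by simp
      then have "\<not> 0 < d j" unfolding q_def by (rule not_less_Least)
      then show ?thesis using False by simp
    qed
  qed
  ultimately show ?thesis unfolding q_def by blast
qed

lemma backward:
  assumes n2: "n \<ge> 2" and Fin: "F \<in> F_matrices n"
  shows "\<exists>p\<in>fh_ranked_tree_shapes n. F_matrix n p = F"
proof -
  define M where "M = 2*n-3"
  define N where "N = 2*n-2"
  have NM: "N = Suc M" using n2 unfolding M_def N_def by simp
  have M1: "1 \<le> M" using n2 unfolding M_def by simp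
  note A = Fin[unfolded F_matrices_def mem_Collect_eq]
  have Fz: "\<And>i j. \<not> (j \<le> i \<and> i \<le> M) \<Longrightarrow> F i j = 0"
    unfolding M_def by (rule A[THEN conjunct1, rule_format]) auto
  have rows: "\<And>i j. 1 \<le> j \<Longrightarrow> j \<le> i \<Longrightarrow> i \<le> M \<Longrightarrow> F i (j - 1) \<le> F i j"
    unfolding M_def by (rule A[THEN conjunct2, THEN conjunct1, rule_format]) auto
  have cols: "\<And>i j. j < i \<Longrightarrow> i \<le> M \<Longrightarrow>
          int (F (i - 1) j) - 1 \<le> int (F i j) \<and> F i j \<le> F (i - 1) j"
    unfolding M_def by (rule A[THEN conjunct2, THEN conjunct2, THEN conjunct1, rule_format]) auto
  have diagpos: "\<And>i. i \<le> M \<Longrightarrow> F i i > 0"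
    unfolding M_def by (rule A[THEN conjunct2, THEN conjunct2, THEN conjunct2, THEN conjunct1, rule_format]) auto
  have F00: "F 0 0 = 2"
    unfolding M_def by (rule A[THEN conjunct2, THEN conjunct2, THEN conjunct2, THEN conjunct2, THEN conjunct1, rule_format])
  have diag: "\<And>i. 0 < i \<Longrightarrow> i < M \<Longrightarrow>
          int (F i i) = int (F (i - 1) (i - 1)) + 1 \<or> int (F i i) = int (F (i - 1) (i - 1)) - 1"
    unfolding M_def by (rule A[THEN conjunct2, THEN conjunct2, THEN conjunct2, THEN conjunct2, THEN conjunct2, THEN conjunct1, rule_format]) auto
  have FMM: "F M M = 1"
    unfolding M_def by (rule A[THEN conjunct2, THEN conjunct2, THEN conjunct2, THEN conjunct2, THEN conjunct2, THEN conjunct2, THEN conjunct1, rule_format])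
  have sub: "\<And>i. 1 \<le> i \<Longrightarrow> i \<le> M \<Longrightarrow> int (F i (i - 1)) = int (F (i - 1) (i - 1)) - 1"
    unfolding M_def by (rule A[THEN conjunct2, THEN conjunct2, THEN conjunct2, THEN conjunct2, THEN conjunct2, THEN conjunct2, THEN conjunct2, THEN conjunct1, rule_format]) auto
  have c3: "\<And>i j. 2 \<le> i \<Longrightarrow> i \<le> M \<Longrightarrow> 1 \<le> j \<Longrightarrow> j \<le> i - 2 \<Longrightarrow>
          int (F i (j - 1)) + int (F (i - 1) j) - int (F (i - 1) (j - 1)) - 1 \<le> int (F i j) \<and>
          int (F i j) \<le> int (F i (j - 1)) + int (F (i - 1) j) - int (F (i - 1) (j - 1))"
    unfolding M_def by (rule A[THEN conjunct2, THEN conjunct2, THEN conjunct2, THEN conjunct2, THEN conjunct2, THEN conjunct2, THEN conjunct2, THEN conjunct2, rule_format]) auto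
  have rowmono: "a \<le> b \<longrightarrow> b \<le> i \<longrightarrow> i \<le> M \<longrightarrow> F i a \<le> F i b" for a b i
  proof (induction b)
    case 0 then show ?case by simp
  next
    case (Suc b)
    show ?case
    proof (intro impI)
      assume h: "a \<le> Suc b" "Suc b \<le> i" "i \<le> M"
      show "F i a \<le> F i (Suc b)"
      proof (cases "a = Suc b")
        case True then show ?thesis by simp
      next
        case False
        then have "F i a \<le> F i b" using Suc h by simp
        also have "F i b \<le> F i (Suc b)" using rows[of "Suc b" i] h by simp
        finally show ?thesis .
      qed
    qed
  qed
  define p where "p w = (if 1 \<le> w \<and> w \<le> N then (LEAST j. F w j < F (w-1) j) else 0)" for w
  have key: "p w < w \<and> (\<forall>j<w. F (w-1) j = F w j + (if p w \<le> j then 1 else 0))"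
    if w1: "1 \<le> w" and wN: "w \<le> N" for w
  proof -
    define d where "d j = F (w-1) j - F w j" for j
    have colw: "F w j \<le> F (w-1) j \<and> F (w-1) j \<le> F w j + 1" if "j < w" for j
    proof (cases "w \<le> M")
      case True
      then show ?thesis using cols[of j w] that by linarith
    next
      case False
      then have wN': "w = N" using wN NM by simp
      then have "F w j = 0" using Fz NM by simp
      moreover have "F (w-1) j \<le> 1" using rowmono[of j M M] FMM that wN' NM by simp
      ultimately show ?thesis by simp
    qed
    have dle: "\<forall>j<w. d j \<le> 1" using colw unfolding d_def by fastforce
    have dw: "d (w-1) = 1"
    proof (cases "w \<le> M")
      case True
      then show ?thesis using sub[of w] w1 colw[of "w-1"] unfolding d_def by simp
    next
      case False
      then have wN': "w = N" using wN NM by simp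
      then show ?thesis using FMM Fz[of M N] NM unfolding d_def by simp
    qed
    have dmono: "\<forall>j. 1 \<le> j \<and> j < w \<longrightarrow> d (j-1) \<le> d j"
    proof (intro allI impI)
      fix j assume j: "1 \<le> j \<and> j < w"
      show "d (j-1) \<le> d j"
      proof (cases "j = w-1")
        case True then show ?thesis using dw dle j by simp
      next
        case False
        then have jw2: "j \<le> w - 2" using j by linarith
        show ?thesis
        proof (cases "w \<le> M")
          case True
          have "int (F w j) \<le> int (F w (j - 1)) + int (F (w - 1) j) - int (F (w - 1) (j - 1))"
            using c3[of w j] True j jw2 by simp
          moreover have "F w j \<le> F (w-1) j" "F w (j-1) \<le> F (w-1) (j-1)" using colw j by auto
          ultimately show ?thesis unfolding d_def by linarith
        next
          case False
          then have wN': "w = N" using wN NM by simp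
          then have "F w j = 0" "F w (j-1) = 0" using Fz NM by auto
          moreover have "F (w-1) (j-1) \<le> F (w-1) j" using rows[of j "w-1"] j wN' NM by simp
          ultimately show ?thesis unfolding d_def by simp
        qed
      qed
    qed
    have st: "(LEAST j. 0 < d j) < w \<and> (\<forall>j<w. d j = (if (LEAST j. 0 < d j) \<le> j then 1 else 0))"
      using step01[OF w1 dle dw dmono] .
    have "(\<lambda>j. 0 < d j) = (\<lambda>j. F w j < F (w-1) j)" unfolding d_def by auto
    then have pw: "p w = (LEAST j. 0 < d j)" unfolding p_def using w1 wN by simp
    have st2: "p w < w \<and> (\<forall>j<w. d j = (if p w \<le> j then 1 else 0))" using st unfolding pw .
    show ?thesis
    proof (intro conjI allI impI)
      show "p w < w" using st2 by simp
    next
      fix j assume jw: "j < w"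
      have "F (w-1) j = F w j + d j" using colw[OF jw] unfolding d_def by simp
      then show "F (w-1) j = F w j + (if p w \<le> j then 1 else 0)" using st2 jw by simp
    qed
  qed
  have FS: "\<forall>j\<le>i. F i j = SS p N i j" if "i \<le> N" for i
    using that
  proof (induction i rule: inc_induct)
    case base
    then show ?case using Fz NM by (simp add: SS_empty)
  next
    case (step m)
    show ?case
    proof (intro allI impI)
      fix j assume jm: "j \<le> m"
      have "F m j = F (Suc m) j + (if p (Suc m) \<le> j then 1 else 0)"
        using key[of "Suc m"] step jm by simp
      also have "\<dots> = SS p N (Suc m) j + (if p (Suc m) \<le> j then 1 else 0)"
        using step jm by simp
      also have "\<dots> = SS p N m j" using SS_step[of "Suc m" N p j] step by simp
      finally show "F m j = SS p N m j" .
    qed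
  qed
  have Feq: "F_matrix n p = F"
  proof (intro ext)
    fix i j
    show "F_matrix n p i j = F i j"
    proof (cases "j \<le> i \<and> i \<le> M")
      case True
      then show ?thesis using FS[of i] NM unfolding Fm M_def N_def by auto
    next
      case False
      then show ?thesis using Fz unfolding Fm M_def by auto
    qed
  qed
  have ltp: "p w < w" if "1 \<le> w" "w \<le> N" for w using key[OF that] by (rule conjunct1)
  have cardch: "card (children p n v) = CC p N v v" for v
    unfolding N_def by (rule card_children) (use ltp N_def in auto)
  have par: "i \<le> M - 1 \<longrightarrow> even (F i i + i)" for i
  proof (induction i)
    case 0 then show ?case using F00 by simp
  next
    case (Suc i)
    show ?case
    proof
      assume "Suc i \<le> M - 1"
      then have "even (F i i + i)" "Suc i < M" using Suc by auto
      have "int (F (Suc i) (Suc i)) = int (F i i) + 1 \<or> int (F (Suc i) (Suc i)) = int (F i i) - 1"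
        using diag[of "Suc i"] \<open>Suc i < M\<close> by simp
      then have "F (Suc i) (Suc i) = F i i + 1 \<or> F (Suc i) (Suc i) + 1 = F i i"
      proof (elim disjE)
        assume "int (F (Suc i) (Suc i)) = int (F i i) + 1"
        then show ?thesis by (intro disjI1) linarith
      next
        assume "int (F (Suc i) (Suc i)) = int (F i i) - 1"
        then show ?thesis by (intro disjI2) linarith
      qed
      then show "even (F (Suc i) (Suc i) + Suc i)" using \<open>even (F i i + i)\<close> by presburger
    qed
  qed
  have ch: "CC p N v v = 0 \<or> CC p N v v = 2" if vN: "v \<le> N" for v
  proof -
    consider "v = 0" | "1 \<le> v \<and> v < M" | "v = M" | "v = N" using vN NM by linarith
    then show ?thesis
    proof cases
      case 1
      then show ?thesis using SS_0[of p N 0] FS[of 0] F00 NM by simp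
    next
      case 2
      have "SS p N v v = SS p N v (v-1) + CC p N v v" using SS_col[of p N v "v-1"] 2 by simp
      moreover have "F v v = SS p N v v" "F v (v-1) = SS p N v (v-1)" using FS[of v] 2 NM by auto
      ultimately show ?thesis using diag[of v] sub[of v] 2 by auto
    next
      case 3
      have "M - 1 = 2 * (n - 2)" unfolding M_def using n2 by simp
      then have "even (F (M-1) (M-1))" using par[of "M-1"] by simp
      moreover have "F (M-1) (M-1) > 0" using diagpos[of "M-1"] by simp
      ultimately have "F (M-1) (M-1) \<ge> 2" by presburger
      then have "F M (M-1) \<ge> 1" using sub[of M] M1 by simp
      moreover have "F M (M-1) \<le> 1" using rows[of M M] M1 FMM by simp
      moreover have "SS p N M M = SS p N M (M-1) + CC p N M M" using SS_col[of p N M "M-1"] M1 by simp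
      moreover have "F M M = SS p N M M" "F M (M-1) = SS p N M (M-1)" using FS[of M] NM by auto
      ultimately show ?thesis using FMM 3 by simp
    next
      case 4
      then show ?thesis unfolding CC_def by simp
    qed
  qed
  have chfin: "finite (children p n v)" for v unfolding children_def by simp
  have UN: "(\<Union>v\<in>{..N}. children p n v) = {1..N}"
  proof
    show "(\<Union>v\<in>{..N}. children p n v) \<subseteq> {1..N}" unfolding children_def N_def by auto
    show "{1..N} \<subseteq> (\<Union>v\<in>{..N}. children p n v)"
    proof
      fix w assume "w \<in> {1..N}"
      then have "w \<in> children p n (p w)" "p w \<le> N" using ltp[of w] unfolding children_def N_def by auto
      then show "w \<in> (\<Union>v\<in>{..N}. children p n v)" by blast
    qed
  qed
  have "card {1..N} = (\<Sum>v\<in>{..N}. card (children p n v))"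
    unfolding UN[symmetric] by (rule card_UN_disjoint) (auto simp: chfin children_def)
  also have "\<dots> = (\<Sum>v\<in>{..N}. 2 * (if \<not> is_leaf p n v then 1 else 0))"
  proof (rule sum.cong)
    fix v assume "v \<in> {..N}"
    then have "card (children p n v) = 0 \<or> card (children p n v) = 2" using ch cardch by simp
    then show "card (children p n v) = 2 * (if \<not> is_leaf p n v then 1 else 0)"
      unfolding is_leaf_def using chfin[of v] by auto
  qed simp
  also have "\<dots> = 2 * card {v\<in>{..N}. \<not> is_leaf p n v}"
    using card_filter_sum[of "{..N}" "\<lambda>v. \<not> is_leaf p n v"]
    by (simp add: sum_distrib_left[symmetric])
  finally have cI: "card {v\<in>{..N}. \<not> is_leaf p n v} = n - 1" unfolding N_def by simp
  have "card {..N} = card {v\<in>{..N}. is_leaf p n v} + card {v\<in>{..N}. \<not> is_leaf p n v}"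
  proof -
    have "{..N} = {v\<in>{..N}. is_leaf p n v} \<union> {v\<in>{..N}. \<not> is_leaf p n v}" by auto
    then have "card {..N} = card ({v\<in>{..N}. is_leaf p n v} \<union> {v\<in>{..N}. \<not> is_leaf p n v})"
      by (rule arg_cong)
    also have "\<dots> = card {v\<in>{..N}. is_leaf p n v} + card {v\<in>{..N}. \<not> is_leaf p n v}"
      by (rule card_Un_disjoint) auto
    finally show ?thesis .
  qed
  then have "card {v\<in>{..N}. is_leaf p n v} = n" using cI NM n2 unfolding N_def by simp
  moreover have "{v\<in>{..N}. is_leaf p n v} = {v. v \<le> 2*n - 2 \<and> is_leaf p n v}" unfolding N_def by auto
  ultimately have leaves: "card {v. v \<le> 2*n - 2 \<and> is_leaf p n v} = n" by simp
  have "p \<in> fh_ranked_tree_shapes n"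
    unfolding fh_ranked_tree_shapes_def mem_Collect_eq
  proof (intro conjI allI impI)
    fix w assume "1 \<le> w \<and> w \<le> 2*n-2" then show "p w < w" using ltp N_def by auto
  next
    fix w assume "w = 0 \<or> w > 2*n-2" then show "p w = 0" unfolding p_def N_def by auto
  next
    fix v assume "v \<le> 2*n-2"
    then show "card (children p n v) = 0 \<or> card (children p n v) = 2" using ch cardch N_def by simp
  next
    show "card {v. v \<le> 2*n - 2 \<and> is_leaf p n v} = n" by (rule leaves)
  qed
  then show ?thesis using Feq by blast
qed

theorem theorem2:
  fixes n :: nat
  assumes "n \<ge> 2"
  shows "bij_betw (F_matrix n) (fh_ranked_tree_shapes n) (F_matrices n)"
  unfolding bij_betw_def
proof (intro conjI)
  show "inj_on (F_matrix n) (fh_ranked_tree_shapes n)"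
  proof (rule inj_onI)
    fix p q assume "p \<in> fh_ranked_tree_shapes n" "q \<in> fh_ranked_tree_shapes n"
      "F_matrix n p = F_matrix n q"
    then show "p = q" by (rule inj_part[OF assms])
  qed
  show "F_matrix n ` fh_ranked_tree_shapes n = F_matrices n"
  proof
    show "F_matrix n ` fh_ranked_tree_shapes n \<subseteq> F_matrices n"
    proof
      fix F assume "F \<in> F_matrix n ` fh_ranked_tree_shapes n"
      then obtain p where "p \<in> fh_ranked_tree_shapes n" "F = F_matrix n p" by (rule imageE)
      then show "F \<in> F_matrices n" using forward[OF assms] by simp
    qed
    show "F_matrices n \<subseteq> F_matrix n ` fh_ranked_tree_shapes n"
    proof
      fix F assume "F \<in> F_matrices n"
      then obtain p where "p \<in> fh_ranked_tree_shapes n" "F_matrix n p = F"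
        using backward[OF assms] by blast
      then show "F \<in> F_matrix n ` fh_ranked_tree_shapes n" by (metis image_eqI)
    qed
  qed
qed

end
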